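(* Let $V=\bigoplus_{n\in\mathbb{Z}}V_n$ be a vertex operator algebra and $M$ a subspace of $V$. (1) Suppose $V=\bigoplus_{n=n_0}^{\infty}V_n$ with $n_0<0$ and $V_{n_0}\neq 0$. Then every $v\in\bigoplus_{n=n_0}^{-1}V_n$ lies in $sr_{0,-1}(M)$; in particular $sr_{0,-1}(M)\neq\{0\}$. (2) Suppose $V$ satisfies the $C_2$-cofiniteness condition and $M\supseteq C_2(V)$. If $u\in\bigoplus_{i=1}^{k}V_i$ for some positive integer $k$, then $u\in sr_{0,-1}(M)$.
   Context: A vertex operator algebra is a $\mathbb{Z}$-graded vertex algebra $V=\bigoplus_{n\in\mathbb{Z}}V_n$ over $\mathbb{C}$ (with $Y(u,z)=\sum_n u_nz^{-n-1}$, $\mathbf{1}\in V_0$, and $u_mV_n\subseteq V_{k+n-m-1}$ for $u\in V_k$), with $\dim V_n<\infty$, $V_n=0$ for $n$ sufficiently negative, and a conformal vector $\omega\in V_2$ whose modes $L(n)$ ($Y(\omega,z)=\sum L(n)z^{-n-2}$) satisfy the Virasoro relations, $L(0)$ acts on $V_n$ as $n$, and $Y(L(-1)v,z)=\frac{d}{dz}Y(v,z)$. $C_2(V)=\operatorname{span}_{\mathbb{C}}\{u_{-2}v:u,v\in V\}$; $V$ satisfies the $C_2$-cofiniteness condition if $\dim V/C_2(V)<\infty$. Iterated products are nested to the right: $v_{n_1}\cdots v_{n_t}v=v_{n_1}(\cdots(v_{n_t}v))$. For a subspace $M\subseteq V$: $lsr_{0,-1}(M)$ is the set of $v\in V$ such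 that for every $b\in V$ there is $m\ge0$ with $b_sv_{n_1}\cdots v_{n_t}v\in M$ for all $t\ge m$ and all $s,n_1,\dots,n_t\in\{0,-1\}$. $rsr_{0,-1}(M)$ is the set of $v\in V$ such that for every $w\in V$ there is $m\ge 0$ with $(v_{n_1}\cdots v_{n_t}v)_nw\in M$ for all $t\ge m$ and all $n,n_1,\dots,n_t\in\{0,-1\}$. $sr_{0,-1}(M)=lsr_{0,-1}(M)\cap rsr_{0,-1}(M)$. *)

theory Defs
  imports "HOL-Analysis.Analysis"
begin

text \<open>Y u n v denotes the mode u_n v; vac is the vacuum,
  om the conformal vector, cc the central charge, Vg n the weight-n subspace.\<close>

definition L_op :: "('v \<Rightarrow> int \<Rightarrow> 'v \<Rightarrow> 'v) \<Rightarrow> 'v \<Rightarrow> int \<Rightarrow> 'v \<Rightarrow> 'v" where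
  "L_op Y om n v = Y om (n + 1) v"

definition is_VOA ::
  "(complex \<Rightarrow> 'v::ab_group_add \<Rightarrow> 'v) \<Rightarrow> ('v \<Rightarrow> int \<Rightarrow> 'v \<Rightarrow> 'v) \<Rightarrow> 'v \<Rightarrow> 'v
     \<Rightarrow> complex \<Rightarrow> (int \<Rightarrow> 'v set) \<Rightarrow> bool" where
  "is_VOA sc Y vac om cc Vg \<longleftrightarrow>
     vector_space sc
   \<comment> \<open>bilinearity of the modes\<close>
   \<and> (\<forall>n v. Vector_Spaces.linear sc sc (\<lambda>u. Y u n v))
   \<and> (\<forall>n u. Vector_Spaces.linear sc sc (\<lambda>v. Y u n v))
   \<comment> \<open>truncation: Y(u,z)v is a Laurent series\<close>
   \<and> (\<forall>u v. \<exists>N. \<forall>n\<ge>N. Y u n v = 0)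
   \<comment> \<open>vacuum axioms\<close>
   \<and> (\<forall>n v. Y vac n v = (if n = -1 then v else 0))
   \<and> (\<forall>u. Y u (-1) vac = u)
   \<and> (\<forall>u n. n \<ge> 0 \<longrightarrow> Y u n vac = 0)
   \<comment> \<open>Borcherds (Jacobi) identity; all sums are finite by truncation\<close>
   \<and> (\<forall>u v w p q r. \<exists>N. \<forall>K\<ge>N.
        (\<Sum>i\<in>{0..K}. sc ((of_int p) gchoose i) (Y (Y u (r + int i) v) (p + q - int i) w))
      = (\<Sum>i\<in>{0..K}. sc ((-1) ^ i * ((of_int r) gchoose i))
            (Y u (p + r - int i) (Y v (q + int i) w)
             - sc ((-1) powi r) (Y v (q + r - int i) (Y u (p + int i) w)))))
   \<comment> \<open>grading V = direct sum of the Vg n\<close>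
   \<and> (\<forall>n. module.subspace sc (Vg n))
   \<and> (\<forall>n. \<exists>F. finite F \<and> module.span sc F = Vg n)
   \<and> (\<forall>v. \<exists>!c::int \<Rightarrow> 'v. finite {n. c n \<noteq> 0} \<and> (\<forall>n. c n \<in> Vg n)
            \<and> v = (\<Sum>n\<in>{n. c n \<noteq> 0}. c n))
   \<and> (\<exists>N. \<forall>n<N. Vg n = {0})
   \<and> vac \<in> Vg 0
   \<and> (\<forall>k n m u v. u \<in> Vg k \<longrightarrow> v \<in> Vg n \<longrightarrow> Y u m v \<in> Vg (k + n - m - 1))
   \<comment> \<open>conformal vector\<close>
   \<and> om \<in> Vg 2
   \<and> (\<forall>m n v. L_op Y om m (L_op Y om n v) - L_op Y om n (L_op Y om m v)
         = sc (of_int (m - n)) (L_op Y om (m + n) v)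
           + (if m + n = 0 then sc ((of_int m ^ 3 - of_int m) / 12 * cc) v else 0))
   \<and> (\<forall>n v. v \<in> Vg n \<longrightarrow> L_op Y om 0 v = sc (of_int n) v)
   \<and> (\<forall>v n w. Y (L_op Y om (-1) v) n w = sc (- of_int n) (Y v (n - 1) w))"

definition C2 :: "(complex \<Rightarrow> 'v::ab_group_add \<Rightarrow> 'v) \<Rightarrow> ('v \<Rightarrow> int \<Rightarrow> 'v \<Rightarrow> 'v) \<Rightarrow> 'v set" where
  "C2 sc Y = module.span sc {Y u (-2) v | u v. True}"

text \<open>dim V / C2(V) < infinity, i.e. V = span F + C2(V) for some finite F.\<close>
definition C2_cofinite :: "(complex \<Rightarrow> 'v::ab_group_add \<Rightarrow> 'v) \<Rightarrow> ('v \<Rightarrow> int \<Rightarrow> 'v \<Rightarrow> 'v) \<Rightarrow> bool" where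
  "C2_cofinite sc Y \<longleftrightarrow> (\<exists>F. finite F \<and> module.span sc (F \<union> C2 sc Y) = UNIV)"

definition iter_prod :: "('v \<Rightarrow> int \<Rightarrow> 'v \<Rightarrow> 'v) \<Rightarrow> 'v \<Rightarrow> int list \<Rightarrow> 'v \<Rightarrow> 'v" where
  "iter_prod Y v ns x = foldr (\<lambda>n acc. Y v n acc) ns x"

definition lsr :: "('v \<Rightarrow> int \<Rightarrow> 'v \<Rightarrow> 'v) \<Rightarrow> 'v set \<Rightarrow> 'v set" where
  "lsr Y M = {v. \<forall>b. \<exists>m::nat. \<forall>ns s. length ns \<ge> m \<longrightarrow> set ns \<subseteq> {0, -1} \<longrightarrow> s \<in> {0, -1}
                 \<longrightarrow> Y b s (iter_prod Y v ns v) \<in> M}"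

definition rsr :: "('v \<Rightarrow> int \<Rightarrow> 'v \<Rightarrow> 'v) \<Rightarrow> 'v set \<Rightarrow> 'v set" where
  "rsr Y M = {v. \<forall>w. \<exists>m::nat. \<forall>ns n. length ns \<ge> m \<longrightarrow> set ns \<subseteq> {0, -1} \<longrightarrow> n \<in> {0, -1}
                 \<longrightarrow> Y (iter_prod Y v ns v) n w \<in> M}"

definition sr :: "('v \<Rightarrow> int \<Rightarrow> 'v \<Rightarrow> 'v) \<Rightarrow> 'v set \<Rightarrow> 'v set" where
  "sr Y M = lsr Y M \<inter> rsr Y M"

end

theory Submission
  imports Defs
begin


locale voa = vector_space sc for sc :: "complex \<Rightarrow> 'v::ab_group_add \<Rightarrow> 'v" +
  fixes Y :: "'v \<Rightarrow> int \<Rightarrow> 'v \<Rightarrow> 'v" and vac om :: 'v and cc :: complex and Vg :: "int \<Rightarrow> 'v set"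
  assumes VOA: "is_VOA sc Y vac om cc Vg"
begin

lemma hom1: "module_hom sc sc (\<lambda>u. Y u n v)"
  using VOA unfolding is_VOA_def by (simp add: module_hom_iff_linear)
lemma hom2: "module_hom sc sc (\<lambda>v. Y u n v)"
  using VOA unfolding is_VOA_def by (simp add: module_hom_iff_linear)

lemma Y0l[simp]: "Y 0 n v = 0" using module_hom.zero[OF hom1] by simp
lemma Y0r[simp]: "Y u n 0 = 0" using module_hom.zero[OF hom2] by simp
lemma Yaddl: "Y (a + b) n v = Y a n v + Y b n v" using module_hom.add[OF hom1] by simp
lemma Yaddr: "Y u n (a + b) = Y u n a + Y u n b" using module_hom.add[OF hom2] by simp
lemma Yscl: "Y (sc c a) n v = sc c (Y a n v)" using module_hom.scale[OF hom1] by simp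
lemma Yscr: "Y u n (sc c a) = sc c (Y u n a)" using module_hom.scale[OF hom2] by simp
lemma Ysuml: "Y (sum f A) n v = (\<Sum>a\<in>A. Y (f a) n v)" using module_hom.sum[OF hom1] by simp
lemma Ysumr: "Y u n (sum f A) = (\<Sum>a\<in>A. Y u n (f a))" using module_hom.sum[OF hom2] by simp

lemma vac_pos: "n \<ge> 0 \<Longrightarrow> Y u n vac = 0" using VOA unfolding is_VOA_def by simp
lemma vac_m1: "Y u (-1) vac = u" using VOA unfolding is_VOA_def by simp
lemma Lm1_raw: "\<forall>v n w. Y (L_op Y om (-1) v) n w = sc (- of_int n) (Y v (n - 1) w)"
  using VOA unfolding is_VOA_def by (elim conjE) assumption
lemma Lm1: "Y (L_op Y om (-1) v) n w = sc (- of_int n) (Y v (n - 1) w)"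
  using Lm1_raw by simp

lemma borch_raw: "\<forall>u v w p q r. \<exists>N. \<forall>K\<ge>N.
        (\<Sum>i\<in>{0..K}. sc ((of_int p) gchoose i) (Y (Y u (r + int i) v) (p + q - int i) w))
      = (\<Sum>i\<in>{0..K}. sc ((-1) ^ i * ((of_int r) gchoose i))
            (Y u (p + r - int i) (Y v (q + int i) w)
             - sc ((-1) powi r) (Y v (q + r - int i) (Y u (p + int i) w))))"
  using VOA unfolding is_VOA_def by (elim conjE) assumption

lemma borch: "\<exists>K\<ge>(2::nat). (\<Sum>i\<in>{0..K}. sc ((of_int p) gchoose i) (Y (Y u (r + int i) v) (p + q - int i) w))
      = (\<Sum>i\<in>{0..K}. sc ((-1) ^ i * ((of_int r) gchoose i))
            (Y u (p + r - int i) (Y v (q + int i) w)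
             - sc ((-1) powi r) (Y v (q + r - int i) (Y u (p + int i) w))))"
proof -
  obtain N where N: "\<forall>K\<ge>N.
        (\<Sum>i\<in>{0..K}. sc ((of_int p) gchoose i) (Y (Y u (r + int i) v) (p + q - int i) w))
      = (\<Sum>i\<in>{0..K}. sc ((-1) ^ i * ((of_int r) gchoose i))
            (Y u (p + r - int i) (Y v (q + int i) w)
             - sc ((-1) powi r) (Y v (q + r - int i) (Y u (p + int i) w))))"
    using borch_raw by blast
  show ?thesis by (rule exI[of _ "max N 2"]) (use N in auto)
qed

lemma sum_first: "(\<And>i. i \<in> {1..K} \<Longrightarrow> f i = 0) \<Longrightarrow> sum f {0..K} = f (0::nat)"
  by (simp add: sum.atLeast_Suc_atMost)

definition C2s where "C2s = span {Y u (-2) v | u v. True}"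

lemma C2s_eq: "C2 sc Y = C2s" unfolding C2_def C2s_def by simp

lemma C2_gen: "Y u (-2) v \<in> C2s" unfolding C2s_def by (rule span_base) auto

lemma C2_neg: "Y u (- int k - 2) v \<in> C2s"
proof (induction k arbitrary: u)
  case 0 then show ?case using C2_gen by simp
next
  case (Suc k)
  have "Y (L_op Y om (-1) u) (- int k - 2) v = sc (of_int (int k + 2)) (Y u (- int (Suc k) - 2) v)"
    using Lm1[of u "- int k - 2" v] by (simp add: algebra_simps)
  moreover have c: "complex_of_int (int k + 2) \<noteq> 0"
    by (metis of_int_eq_0_iff add_nonneg_pos of_nat_0_le_iff zero_less_numeral order_less_irrefl)
  ultimately have "Y u (- int (Suc k) - 2) v = sc (1 / of_int (int k + 2)) (Y (L_op Y om (-1) u) (- int k - 2) v)"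
    by (simp only: scale_scale) (simp add: c)
  then show ?case using Suc.IH subspace_scale[OF subspace_span] unfolding C2s_def by metis
qed

lemma C2_le: "n \<le> -2 \<Longrightarrow> Y u n v \<in> C2s"
  using C2_neg[where k="nat (- n - 2)" and u=u and v=v] by simp

lemma sub_C2s: "subspace C2s" unfolding C2s_def by simp

lemma sub_pre: "module_hom sc sc f \<Longrightarrow> subspace S \<Longrightarrow> subspace {x. f x \<in> S}"
proof -
  assume f: "module_hom sc sc f" and S: "subspace S"
  show ?thesis unfolding subspace_def
  proof (intro conjI ballI allI CollectI)
    show "f 0 \<in> S" using module_hom.zero[OF f] subspace_0[OF S] by simp
    show "f (x + y) \<in> S" if "x \<in> {x. f x \<in> S}" "y \<in> {x. f x \<in> S}" for x y
      using that module_hom.add[OF f, of x y] subspace_add[OF S] by simp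
    show "f (sc c x) \<in> S" if "x \<in> {x. f x \<in> S}" for c x
      using that module_hom.scale[OF f, of c x] subspace_scale[OF S] by simp
  qed
qed

lemma comm0: "Y y 0 (Y a q b) = Y (Y y 0 a) q b + Y a q (Y y 0 b)"
proof -
  obtain K where K: "K \<ge> 2" and E: "(\<Sum>i\<in>{0..K}. sc ((of_int 0) gchoose i) (Y (Y y (0 + int i) a) (0 + q - int i) b))
      = (\<Sum>i\<in>{0..K}. sc ((-1) ^ i * ((of_int 0) gchoose i))
            (Y y (0 + 0 - int i) (Y a (q + int i) b)
             - sc ((-1) powi 0) (Y a (q + 0 - int i) (Y y (0 + int i) b))))"
    using borch[of 0 y 0 a q b] by blast
  have L: "(\<Sum>i\<in>{0..K}. sc ((of_int 0) gchoose i) (Y (Y y (0 + int i) a) (0 + q - int i) b)) = Y (Y y 0 a) q b"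
    by (subst sum_first) (auto simp: gbinomial_0_left)
  have R: "(\<Sum>i\<in>{0..K}. sc ((-1) ^ i * ((of_int 0) gchoose i))
            (Y y (0 + 0 - int i) (Y a (q + int i) b)
             - sc ((-1) powi 0) (Y a (q + 0 - int i) (Y y (0 + int i) b)))) = Y y 0 (Y a q b) - Y a q (Y y 0 b)"
    by (subst sum_first) (auto simp: gbinomial_0_left)
  from E L R have "Y (Y y 0 a) q b = Y y 0 (Y a q b) - Y a q (Y y 0 b)" by simp
  then show ?thesis by (metis diff_add_cancel)
qed

lemma left_m1: "Y y (-1) (Y a (-2) b) \<in> C2s"
proof -
  obtain K where K: "K \<ge> 2" and E: "(\<Sum>i\<in>{0..K}. sc ((of_int (-1)) gchoose i) (Y (Y y (0 + int i) a) (-1 + -2 - int i) b))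
      = (\<Sum>i\<in>{0..K}. sc ((-1) ^ i * ((of_int 0) gchoose i))
            (Y y (-1 + 0 - int i) (Y a (-2 + int i) b)
             - sc ((-1) powi 0) (Y a (-2 + 0 - int i) (Y y (-1 + int i) b))))"
    using borch[of "-1" y 0 a "-2" b] by blast
  have L: "(\<Sum>i\<in>{0..K}. sc ((of_int (-1)) gchoose i) (Y (Y y (0 + int i) a) (-1 + -2 - int i) b)) \<in> C2s"
    by (intro subspace_sum[OF sub_C2s] subspace_scale[OF sub_C2s] C2_le) auto
  have R: "(\<Sum>i\<in>{0..K}. sc ((-1) ^ i * ((of_int 0) gchoose i))
            (Y y (-1 + 0 - int i) (Y a (-2 + int i) b)
             - sc ((-1) powi 0) (Y a (-2 + 0 - int i) (Y y (-1 + int i) b)))) = Y y (-1) (Y a (-2) b) - Y a (-2) (Y y (-1) b)"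
    by (subst sum_first) (auto simp: gbinomial_0_left)
  have "Y y (-1) (Y a (-2) b) = (Y y (-1) (Y a (-2) b) - Y a (-2) (Y y (-1) b)) + Y a (-2) (Y y (-1) b)" by simp
  then show ?thesis using E L R subspace_add[OF sub_C2s] C2_gen by metis
qed

lemma right_gen: "q \<in> {0, -1} \<Longrightarrow> Y (Y a (-2) b) q w \<in> C2s"
proof -
  assume q: "q \<in> {0, -1}"
  obtain K where K: "K \<ge> 2" and E: "(\<Sum>i\<in>{0..K}. sc ((of_int 0) gchoose i) (Y (Y a (-2 + int i) b) (0 + q - int i) w))
      = (\<Sum>i\<in>{0..K}. sc ((-1) ^ i * ((of_int (-2)) gchoose i))
            (Y a (0 + -2 - int i) (Y b (q + int i) w)
             - sc ((-1) powi (-2)) (Y b (q + -2 - int i) (Y a (0 + int i) w))))"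
    using borch[of 0 a "-2" b q w] by blast
  have L: "(\<Sum>i\<in>{0..K}. sc ((of_int 0) gchoose i) (Y (Y a (-2 + int i) b) (0 + q - int i) w)) = Y (Y a (-2) b) q w"
    by (subst sum_first) (auto simp: gbinomial_0_left)
  have R: "(\<Sum>i\<in>{0..K}. sc ((-1) ^ i * ((of_int (-2)) gchoose i))
            (Y a (0 + -2 - int i) (Y b (q + int i) w)
             - sc ((-1) powi (-2)) (Y b (q + -2 - int i) (Y a (0 + int i) w)))) \<in> C2s"
    using q by (intro subspace_sum[OF sub_C2s] subspace_scale[OF sub_C2s] subspace_diff[OF sub_C2s] C2_le) auto
  from E L R show ?thesis by simp
qed

lemma skew: "Y u 0 u \<in> C2s"
proof -
  obtain K where K: "K \<ge> 2" and E: "(\<Sum>i\<in>{0..K}. sc ((of_int (-1)) gchoose i) (Y (Y u (1 + int i) u) (-1 + -1 - int i) vac))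
      = (\<Sum>i\<in>{0..K}. sc ((-1) ^ i * ((of_int 1) gchoose i))
            (Y u (-1 + 1 - int i) (Y u (-1 + int i) vac)
             - sc ((-1) powi 1) (Y u (-1 + 1 - int i) (Y u (-1 + int i) vac))))"
    using borch[of "-1" u 1 u "-1" vac] by blast
  have L: "(\<Sum>i\<in>{0..K}. sc ((of_int (-1)) gchoose i) (Y (Y u (1 + int i) u) (-1 + -1 - int i) vac)) \<in> C2s"
    by (intro subspace_sum[OF sub_C2s] subspace_scale[OF sub_C2s] C2_le) auto
  have R: "(\<Sum>i\<in>{0..K}. sc ((-1) ^ i * ((of_int 1) gchoose i))
            (Y u (-1 + 1 - int i) (Y u (-1 + int i) vac)
             - sc ((-1) powi 1) (Y u (-1 + 1 - int i) (Y u (-1 + int i) vac)))) = Y u 0 u + Y u 0 u"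
    by (subst sum_first) (auto simp: vac_pos vac_m1 scale_minus_left)
  have "Y u 0 u + Y u 0 u = sc 2 (Y u 0 u)"
    using scale_left_distrib[of 1 1 "Y u 0 u"] by simp
  then have "Y u 0 u = sc (1/2) (Y u 0 u + Y u 0 u)" by simp
  then show ?thesis using E L R subspace_scale[OF sub_C2s] by metis
qed

lemma gen_left: "s \<in> {0, -1} \<Longrightarrow> Y y s (Y a (-2) b) \<in> C2s"
proof -
  assume s: "s \<in> {0, -1}"
  show ?thesis
  proof (cases "s = 0")
    case True
    have "Y y 0 (Y a (-2) b) \<in> C2s"
      unfolding comm0[of y a "-2" b] by (rule subspace_add[OF sub_C2s C2_gen C2_gen])
    then show ?thesis using True by simp
  next
    case False
    then have "s = -1" using s by simp
    then show ?thesis using left_m1 by simp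
  qed
qed

lemma C2_left: "x \<in> C2s \<Longrightarrow> s \<in> {0, -1} \<Longrightarrow> Y y s x \<in> C2s"
proof -
  assume x: "x \<in> C2s" and s: "s \<in> {0, -1}"
  have sub: "subspace {x. Y y s x \<in> C2s}" by (rule sub_pre[OF hom2 sub_C2s])
  have gen: "{Y u (- 2) v |u v. True} \<subseteq> {x. Y y s x \<in> C2s}"
    using gen_left[OF s] by blast
  have "C2s \<subseteq> {x. Y y s x \<in> C2s}"
    using span_minimal[OF gen sub] unfolding C2s_def .
  then show ?thesis using x by blast
qed

lemma C2_right: "x \<in> C2s \<Longrightarrow> s \<in> {0, -1} \<Longrightarrow> Y x s w \<in> C2s"
proof -
  assume x: "x \<in> C2s" and s: "s \<in> {0, -1}"
  have sub: "subspace {x. Y x s w \<in> C2s}" by (rule sub_pre[OF hom1 sub_C2s])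
  have gen: "{Y u (- 2) v |u v. True} \<subseteq> {x. Y x s w \<in> C2s}"
    using right_gen[OF s] by blast
  have "C2s \<subseteq> {x. Y x s w \<in> C2s}"
    using span_minimal[OF gen sub] unfolding C2s_def .
  then show ?thesis using x by blast
qed

end

context voa begin

lemma subVg: "subspace (Vg n)" using VOA unfolding is_VOA_def by simp
lemma uniq: "\<exists>!c::int \<Rightarrow> 'v. finite {n. c n \<noteq> 0} \<and> (\<forall>n. c n \<in> Vg n) \<and> v = (\<Sum>n\<in>{n. c n \<noteq> 0}. c n)"
proof -
  have "\<forall>v. \<exists>!c::int \<Rightarrow> 'v. finite {n. c n \<noteq> 0} \<and> (\<forall>n. c n \<in> Vg n) \<and> v = (\<Sum>n\<in>{n. c n \<noteq> 0}. c n)"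
    using VOA unfolding is_VOA_def by (elim conjE) assumption
  then show ?thesis by (rule spec)
qed

definition isdec :: "'v \<Rightarrow> (int \<Rightarrow> 'v) \<Rightarrow> bool" where
  "isdec v c \<longleftrightarrow> finite {n. c n \<noteq> 0} \<and> (\<forall>n. c n \<in> Vg n) \<and> v = (\<Sum>n\<in>{n. c n \<noteq> 0}. c n)"

lemma uniq2: "\<exists>!c. isdec v c" unfolding isdec_def by (rule uniq)

definition dec :: "'v \<Rightarrow> int \<Rightarrow> 'v" where
  "dec v = (THE c. isdec v c)"

lemma dec_isdec: "isdec v (dec v)"
  unfolding dec_def by (rule theI'[OF uniq2])

lemma dec_prop: "finite {n. dec v n \<noteq> 0} \<and> (\<forall>n. dec v n \<in> Vg n) \<and> v = (\<Sum>n\<in>{n. dec v n \<noteq> 0}. dec v n)"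
  using dec_isdec[of v] unfolding isdec_def .

lemma dec_fin: "finite {n. dec v n \<noteq> 0}" using dec_prop[THEN conjunct1] .
lemma dec_Vg: "dec v n \<in> Vg n" using dec_prop[THEN conjunct2, THEN conjunct1] by (rule spec)
lemma dec_rep: "v = (\<Sum>n\<in>{n. dec v n \<noteq> 0}. dec v n)" using dec_prop[THEN conjunct2, THEN conjunct2] .

lemma dec_sum: "finite S \<Longrightarrow> {n. dec v n \<noteq> 0} \<subseteq> S \<Longrightarrow> v = sum (dec v) S"
proof -
  assume S: "finite S" "{n. dec v n \<noteq> 0} \<subseteq> S"
  have "v = (\<Sum>n\<in>{n. dec v n \<noteq> 0}. dec v n)" by (rule dec_rep)
  also have "\<dots> = sum (dec v) S" by (rule sum.mono_neutral_left[OF S(1) S(2)]) simp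
  finally show ?thesis .
qed

lemma dec_unique:
  assumes S: "finite S" and c: "\<And>n. c n \<in> Vg n" and z: "\<And>n. n \<notin> S \<Longrightarrow> c n = 0" and v: "v = sum c S"
  shows "dec v = c"
proof -
  have sub: "{n. c n \<noteq> 0} \<subseteq> S" using z by blast
  have fin: "finite {n. c n \<noteq> 0}" by (rule finite_subset[OF sub S])
  have "sum c S = (\<Sum>n\<in>{n. c n \<noteq> 0}. c n)" by (rule sum.mono_neutral_right[OF S sub]) simp
  then have P: "finite {n. c n \<noteq> 0} \<and> (\<forall>n. c n \<in> Vg n) \<and> v = (\<Sum>n\<in>{n. c n \<noteq> 0}. c n)"
    using fin c v by simp
  then have "isdec v c" unfolding isdec_def .
  then show ?thesis unfolding dec_def by (rule the1_equality[OF uniq2])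
qed

lemma dec_add: "dec (x + y) = (\<lambda>n. dec x n + dec y n)"
proof -
  let ?S = "{n. dec x n \<noteq> 0} \<union> {n. dec y n \<noteq> 0}"
  show ?thesis
  proof (rule dec_unique[of ?S])
    show "finite ?S" using dec_fin by auto
    show "dec x n + dec y n \<in> Vg n" for n using subspace_add[OF subVg dec_Vg dec_Vg] .
    show "n \<notin> ?S \<Longrightarrow> dec x n + dec y n = 0" for n by auto
    show "x + y = (\<Sum>n\<in>?S. dec x n + dec y n)"
      using dec_sum[of ?S x] dec_sum[of ?S y] dec_fin by (auto simp: sum.distrib)
  qed
qed

lemma dec_scale: "dec (sc a x) = (\<lambda>n. sc a (dec x n))"
proof -
  let ?S = "{n. dec x n \<noteq> 0}"
  show ?thesis
  proof (rule dec_unique[of ?S])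
    show "finite ?S" using dec_fin by auto
    show "sc a (dec x n) \<in> Vg n" for n using subspace_scale[OF subVg dec_Vg] .
    show "n \<notin> ?S \<Longrightarrow> sc a (dec x n) = 0" for n by auto
    show "sc a x = (\<Sum>n\<in>?S. sc a (dec x n))"
      using dec_sum[of ?S x] dec_fin by (metis order_refl scale_sum_right)
  qed
qed

lemma dec_zero: "dec 0 = (\<lambda>n. 0)"
  by (rule dec_unique[of "{}"]) (auto intro: subspace_0[OF subVg])

lemma dec_hom: "x \<in> Vg m \<Longrightarrow> dec x = (\<lambda>n. if n = m then x else 0)"
  by (rule dec_unique[of "{m}"]) (auto intro: subspace_0[OF subVg])

lemma dec_eq0: "(\<And>n. dec v n = 0) \<Longrightarrow> v = 0"
  using dec_sum[of "{}" v] by auto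

definition Low where "Low j = {v. \<forall>m>j. dec v m = 0}"
definition High where "High j = {v. \<forall>m<j. dec v m = 0}"

lemma sub_Low: "subspace (Low j)"
  unfolding subspace_def Low_def by (auto simp: dec_add dec_scale dec_zero)
lemma sub_High: "subspace (High j)"
  unfolding subspace_def High_def by (auto simp: dec_add dec_scale dec_zero)

lemma Vg_Low: "x \<in> Vg m \<Longrightarrow> m \<le> j \<Longrightarrow> x \<in> Low j"
  unfolding Low_def by (auto simp: dec_hom)
lemma Vg_High: "x \<in> Vg m \<Longrightarrow> j \<le> m \<Longrightarrow> x \<in> High j"
  unfolding High_def by (auto simp: dec_hom)
lemma Low_mono: "i \<le> j \<Longrightarrow> x \<in> Low i \<Longrightarrow> x \<in> Low j"
  unfolding Low_def by auto
lemma High_mono: "i \<le> j \<Longrightarrow> x \<in> High j \<Longrightarrow> x \<in> High i"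
  unfolding High_def by auto

lemma Ygrade_raw: "\<forall>k n m u v. u \<in> Vg k \<longrightarrow> v \<in> Vg n \<longrightarrow> Y u m v \<in> Vg (k + n - m - 1)"
  using VOA unfolding is_VOA_def by (elim conjE) assumption
lemma Ygrade: "u \<in> Vg k \<Longrightarrow> v \<in> Vg n \<Longrightarrow> Y u m v \<in> Vg (k + n - m - 1)"
  using Ygrade_raw by blast

lemma Y_expand: "Y x s y = (\<Sum>a\<in>{n. dec x n \<noteq> 0}. \<Sum>b\<in>{n. dec y n \<noteq> 0}. Y (dec x a) s (dec y b))"
proof -
  have "Y x s y = Y (sum (dec x) {n. dec x n \<noteq> 0}) s (sum (dec y) {n. dec y n \<noteq> 0})"
    using dec_sum[OF dec_fin order_refl, of x] dec_sum[OF dec_fin order_refl, of y] by simp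
  also have "\<dots> = (\<Sum>a\<in>{n. dec x n \<noteq> 0}. Y (dec x a) s (sum (dec y) {n. dec y n \<noteq> 0}))"
    by (rule Ysuml)
  also have "\<dots> = (\<Sum>a\<in>{n. dec x n \<noteq> 0}. \<Sum>b\<in>{n. dec y n \<noteq> 0}. Y (dec x a) s (dec y b))"
    by (simp only: Ysumr)
  finally show ?thesis .
qed

lemma Y_Low: "x \<in> Low i \<Longrightarrow> y \<in> Low j \<Longrightarrow> Y x s y \<in> Low (i + j - s - 1)"
  unfolding Y_expand[of x s y]
proof (intro subspace_sum[OF sub_Low])
  fix a b assume x: "x \<in> Low i" and y: "y \<in> Low j" and a: "a \<in> {n. dec x n \<noteq> 0}" and b: "b \<in> {n. dec y n \<noteq> 0}"
  have "a \<le> i"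
  proof (rule ccontr)
    assume "\<not> a \<le> i" then have "a > i" by simp
    then show False using x a unfolding Low_def by auto
  qed
  moreover have "b \<le> j"
  proof (rule ccontr)
    assume "\<not> b \<le> j" then have "b > j" by simp
    then show False using y b unfolding Low_def by auto
  qed
  ultimately show "Y (dec x a) s (dec y b) \<in> Low (i + j - s - 1)"
    by (intro Vg_Low[OF Ygrade[OF dec_Vg dec_Vg]]) auto
qed

lemma Y_High: "x \<in> High i \<Longrightarrow> y \<in> High j \<Longrightarrow> Y x s y \<in> High (i + j - s - 1)"
  unfolding Y_expand[of x s y]
proof (intro subspace_sum[OF sub_High])
  fix a b assume x: "x \<in> High i" and y: "y \<in> High j" and a: "a \<in> {n. dec x n \<noteq> 0}" and b: "b \<in> {n. dec y n \<noteq> 0}"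
  have "i \<le> a"
  proof (rule ccontr)
    assume "\<not> i \<le> a" then have "a < i" by simp
    then show False using x a unfolding High_def by auto
  qed
  moreover have "j \<le> b"
  proof (rule ccontr)
    assume "\<not> j \<le> b" then have "b < j" by simp
    then show False using y b unfolding High_def by auto
  qed
  ultimately show "Y (dec x a) s (dec y b) \<in> High (i + j - s - 1)"
    by (intro Vg_High[OF Ygrade[OF dec_Vg dec_Vg]]) auto
qed

lemma Low_High_0: "x \<in> Low (j - 1) \<Longrightarrow> x \<in> High j \<Longrightarrow> x = 0"
proof -
  assume L: "x \<in> Low (j - 1)" and H: "x \<in> High j"
  show "x = 0"
  proof (rule dec_eq0)
    fix m show "dec x m = 0"
    proof (cases "m < j")
      case True then show ?thesis using H unfolding High_def by auto
    next
      case False then have "m > j - 1" by simp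
      then show ?thesis using L unfolding Low_def by auto
    qed
  qed
qed

end

context voa begin

lemma iter_Cons[simp]: "iter_prod Y v (n # ns) x = Y v n (iter_prod Y v ns x)"
  unfolding iter_prod_def by simp
lemma iter_Nil[simp]: "iter_prod Y v [] x = x"
  unfolding iter_prod_def by simp

lemma iter_zero_sub: "set ns \<subseteq> {-1} \<Longrightarrow> Y u 0 (iter_prod Y u ns u) \<in> C2s"
proof (induction ns)
  case Nil then show ?case using skew by simp
next
  case (Cons n ns)
  then have n: "n = -1" and ns: "set ns \<subseteq> {-1}" by auto
  have "Y u 0 (iter_prod Y u (n # ns) u) = Y (Y u 0 u) (-1) (iter_prod Y u ns u) + Y u (-1) (Y u 0 (iter_prod Y u ns u))"
    using comm0[of u u "-1" "iter_prod Y u ns u"] n by simp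
  moreover have "Y (Y u 0 u) (-1) (iter_prod Y u ns u) \<in> C2s" by (rule C2_right[OF skew]) simp
  moreover have "Y u (-1) (Y u 0 (iter_prod Y u ns u)) \<in> C2s" by (rule C2_left[OF Cons.IH[OF ns]]) simp
  ultimately show ?case using subspace_add[OF sub_C2s] by metis
qed

lemma iter_zero: "set ns \<subseteq> {0, -1} \<Longrightarrow> 0 \<in> set ns \<Longrightarrow> iter_prod Y u ns u \<in> C2s"
proof (induction ns)
  case Nil then show ?case by simp
next
  case (Cons n ns)
  show ?case
  proof (cases "0 \<in> set ns")
    case True
    then show ?thesis using Cons by (auto intro: C2_left)
  next
    case False
    then have "set ns \<subseteq> {-1}" "n = 0" using Cons.prems by auto
    then show ?thesis using iter_zero_sub by simp
  qed
qed

lemma iter_m1: "u \<in> High 1 \<Longrightarrow> set ns \<subseteq> {-1} \<Longrightarrow> iter_prod Y u ns u \<in> High (1 + int (length ns))"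
proof (induction ns)
  case Nil then show ?case by simp
next
  case (Cons n ns)
  then have n: "n = -1" and I: "iter_prod Y u ns u \<in> High (1 + int (length ns))" by auto
  have "Y u (-1) (iter_prod Y u ns u) \<in> High (1 + (1 + int (length ns)) - (-1) - 1)"
    by (rule Y_High[OF Cons.prems(1) I])
  then show ?case using n by (simp add: algebra_simps)
qed

lemma iter_neg: "v \<in> Low (-1) \<Longrightarrow> set ns \<subseteq> {0, -1} \<Longrightarrow> iter_prod Y v ns v \<in> Low (-1 - int (length ns))"
proof (induction ns)
  case Nil then show ?case by simp
next
  case (Cons n ns)
  then have n: "n \<in> {0, -1}" and I: "iter_prod Y v ns v \<in> Low (-1 - int (length ns))" by auto
  have "Y v n (iter_prod Y v ns v) \<in> Low (-1 + (-1 - int (length ns)) - n - 1)"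
    by (rule Y_Low[OF Cons.prems(1) I])
  then have "iter_prod Y v (n # ns) v \<in> Low (-1 + (-1 - int (length ns)) - n - 1)" by simp
  then show ?case by (rule Low_mono[rotated]) (use n in auto)
qed

lemma cofinite_High:
  assumes F: "finite F" and sp: "span (F \<union> C2s) = UNIV"
  shows "\<exists>T>0. High T \<subseteq> C2s"
proof -
  define S where "S = (\<Union>f\<in>F. {n. dec f n \<noteq> 0})"
  have fS: "finite S" unfolding S_def using F dec_fin by auto
  define T where "T = Max (insert 0 S) + 1"
  have T0: "T > 0" unfolding T_def using fS by (simp add: Max_ge_iff)
  have FL: "F \<subseteq> Low (T - 1)"
  proof
    fix f assume f: "f \<in> F"
    show "f \<in> Low (T - 1)" unfolding Low_def
    proof (intro CollectI allI impI)
      fix m assume m: "m > T - 1"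
      show "dec f m = 0"
      proof (rule ccontr)
        assume "dec f m \<noteq> 0"
        then have "m \<in> S" using f unfolding S_def by auto
        then have "m \<le> Max (insert 0 S)" using fS by simp
        then show False using m unfolding T_def by simp
      qed
    qed
  qed
  let ?P = "{x + y | x y. x \<in> C2s \<inter> Low (T - 1) \<and> y \<in> C2s \<inter> High T}"
  have subP: "subspace ?P"
    by (intro subspace_sums subspace_inter sub_C2s sub_Low sub_High)
  have C2P: "C2s \<subseteq> ?P"
    unfolding C2s_def[of]
  proof (rule span_minimal[OF _ subP[unfolded C2s_def]])
    show "{Y u (- 2) v |u v. True} \<subseteq> {x + y |x y. x \<in> span {Y u (- 2) v |u v. True} \<inter> Low (T - 1) \<and> y \<in> span {Y u (- 2) v |u v. True} \<inter> High T}"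
    proof safe
      fix a b
      have "Y a (-2) b \<in> ?P" unfolding Y_expand[where x=a and s="-2" and y=b]
      proof (intro subspace_sum[OF subP])
        fix i j
        let ?t = "Y (dec a i) (-2) (dec b j)"
        have tC: "?t \<in> C2s" by (rule C2_gen)
        have tV: "?t \<in> Vg (i + j + 1)" using Ygrade[OF dec_Vg[of a i] dec_Vg[of b j], where m="-2"] by (simp add: add.commute add.left_commute)
        show "?t \<in> ?P"
        proof (cases "i + j + 1 \<le> T - 1")
          case True
          then have "?t \<in> Low (T - 1)" using Vg_Low[OF tV] by simp
          moreover have "(0::'v) \<in> C2s \<inter> High T" using subspace_0[OF sub_C2s] subspace_0[OF sub_High] by simp
          ultimately show ?thesis using tC by (metis (mono_tags, lifting) IntI add_0_right mem_Collect_eq)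
        next
          case False
          then have "?t \<in> High T" using Vg_High[OF tV] by simp
          moreover have "(0::'v) \<in> C2s \<inter> Low (T - 1)" using subspace_0[OF sub_C2s] subspace_0[OF sub_Low] by simp
          ultimately show ?thesis using tC by (metis (mono_tags, lifting) IntI add_0 mem_Collect_eq)
        qed
      qed
      then show "\<exists>x y. Y a (- 2) b = x + y \<and> x \<in> span {Y u (- 2) v |u v. True} \<inter> Low (T - 1) \<and> y \<in> span {Y u (- 2) v |u v. True} \<inter> High T"
        unfolding C2s_def by blast
    qed
  qed
  have "High T \<subseteq> C2s"
  proof
    fix x assume xH: "x \<in> High T"
    have "x \<in> span (F \<union> C2s)" using sp by simp
    then obtain f c where x: "x = f + c" and f: "f \<in> span F" and c: "c \<in> span C2s"
      unfolding span_Un by blast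
    have "c \<in> C2s" using c sub_C2s by (simp add: span_eq_iff[THEN iffD2])
    then obtain c1 c2 where c12: "c = c1 + c2" "c1 \<in> C2s" "c1 \<in> Low (T - 1)" "c2 \<in> C2s" "c2 \<in> High T"
      using C2P by blast
    have fL: "f \<in> Low (T - 1)" using span_minimal[OF FL sub_Low] f by blast
    have "x - c2 = f + c1" using x c12 by simp
    then have L: "x - c2 \<in> Low (T - 1)" using subspace_add[OF sub_Low fL c12(3)] by simp
    have H: "x - c2 \<in> High T" using subspace_diff[OF sub_High xH c12(5)] .
    have "x - c2 = 0" by (rule Low_High_0[OF L H])
    then show "x \<in> C2s" using c12 by simp
  qed
  then show ?thesis using T0 by blast
qed



lemma part1:
  assumes M: "subspace M" and n0: "n0 < 0" "Vg n0 \<noteq> {0}" "\<forall>n<n0. Vg n = {0}"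
  shows "(\<forall>v \<in> span (\<Union>n\<in>{n0..-1}. Vg n). v \<in> sr Y M) \<and> sr Y M \<noteq> {0}"
proof -
  have spL: "span (\<Union>n\<in>{n0..-1}. Vg n) \<subseteq> Low (-1)"
    by (rule span_minimal[OF _ sub_Low]) (auto intro: Vg_Low)
  have low0: "x \<in> Low j \<Longrightarrow> j < n0 \<Longrightarrow> x = 0" for x j
  proof (rule dec_eq0)
    fix m assume x: "x \<in> Low j" and j: "j < n0"
    show "dec x m = 0"
    proof (cases "m \<le> j")
      case True
      then show ?thesis using dec_Vg[of x m] n0(3) j by auto
    next
      case False
      then show ?thesis using x unfolding Low_def by auto
    qed
  qed
  have it0: "iter_prod Y v ns v = 0" if v: "v \<in> Low (-1)" and ns: "set ns \<subseteq> {0, -1}" and l: "length ns \<ge> nat (- n0)" for v ns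
    by (rule low0[OF iter_neg[OF v ns]]) (use l n0(1) in linarith)
  have vsr: "v \<in> sr Y M" if v: "v \<in> Low (-1)" for v
  proof -
    have z: "iter_prod Y v ns v = 0" if "set ns \<subseteq> {0, -1}" "length ns \<ge> nat (- n0)" for ns
      using it0[OF v that] .
    have "v \<in> lsr Y M" unfolding lsr_def
    proof (intro CollectI allI exI[of _ "nat (- n0)"] impI)
      fix b and ns :: "int list" and s :: int assume "nat (- n0) \<le> length ns" "set ns \<subseteq> {0, -1}" "s \<in> {0, -1}"
      then show "Y b s (iter_prod Y v ns v) \<in> M" using z subspace_0[OF M] by simp
    qed
    moreover have "v \<in> rsr Y M" unfolding rsr_def
    proof (intro CollectI allI exI[of _ "nat (- n0)"] impI)
      fix w and ns :: "int list" and n :: int assume "nat (- n0) \<le> length ns" "set ns \<subseteq> {0, -1}" "n \<in> {0, -1}"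
      then show "Y (iter_prod Y v ns v) n w \<in> M" using z subspace_0[OF M] by simp
    qed
    ultimately show ?thesis unfolding sr_def by blast
  qed
  have A: "\<forall>v \<in> span (\<Union>n\<in>{n0..-1}. Vg n). v \<in> sr Y M" using vsr spL by blast
  obtain v where v: "v \<in> Vg n0" "v \<noteq> 0" using n0(2) subspace_0[OF subVg, of n0] by blast
  have "v \<in> span (\<Union>n\<in>{n0..-1}. Vg n)" by (rule span_base) (use v n0(1) in auto)
  then have "v \<in> sr Y M" using A by blast
  with v show ?thesis using A by blast
qed

lemma part2:
  assumes M: "subspace M" and cof: "C2_cofinite sc Y" and CM: "C2 sc Y \<subseteq> M"
    and u: "u \<in> span (\<Union>i\<in>{1..k}. Vg i)"
  shows "u \<in> sr Y M"
proof -
  obtain F where F: "finite F" "span (F \<union> C2s) = UNIV"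
    using cof unfolding C2_cofinite_def C2s_eq by (elim exE conjE) (rule that)
  obtain T where T: "T > 0" "High T \<subseteq> C2s" using cofinite_High[OF F] by blast
  have "(\<Union>i\<in>{1..k}. Vg i) \<subseteq> High 1"
  proof
    fix x assume "x \<in> (\<Union>i\<in>{1..k}. Vg i)"
    then obtain i where "i \<in> {1..k}" "x \<in> Vg i" by blast
    then show "x \<in> High 1" using Vg_High[of x i 1] by simp
  qed
  then have "span (\<Union>i\<in>{1..k}. Vg i) \<subseteq> High 1" by (rule span_minimal[OF _ sub_High])
  then have uH: "u \<in> High 1" using u by (rule subsetD)
  have itC: "iter_prod Y u ns u \<in> C2s" if ns: "set ns \<subseteq> {0, -1}" and l: "length ns \<ge> nat T" for ns
  proof (cases "0 \<in> set ns")
    case True then show ?thesis using iter_zero[OF ns] by simp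
  next
    case False
    then have "set ns \<subseteq> {-1}" using ns by auto
    from iter_m1[OF uH this] have "iter_prod Y u ns u \<in> High T"
      by (rule High_mono[rotated]) (use l T(1) in simp)
    then show ?thesis using T by blast
  qed
  have CM': "C2s \<subseteq> M" using CM C2s_eq by simp
  have "u \<in> lsr Y M" unfolding lsr_def
  proof (intro CollectI allI exI[of _ "nat T"] impI)
    fix b and ns :: "int list" and s :: int assume "nat T \<le> length ns" "set ns \<subseteq> {0, -1}" "s \<in> {0, -1}"
    then have "iter_prod Y u ns u \<in> C2s" using itC by simp
    then have "Y b s (iter_prod Y u ns u) \<in> C2s" using C2_left \<open>s \<in> {0, -1}\<close> by simp
    then show "Y b s (iter_prod Y u ns u) \<in> M" using CM' by (rule subsetD[rotated])
  qed
  moreover have "u \<in> rsr Y M" unfolding rsr_def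
  proof (intro CollectI allI exI[of _ "nat T"] impI)
    fix w and ns :: "int list" and n :: int assume "nat T \<le> length ns" "set ns \<subseteq> {0, -1}" "n \<in> {0, -1}"
    then have "iter_prod Y u ns u \<in> C2s" using itC by simp
    then have "Y (iter_prod Y u ns u) n w \<in> C2s" using C2_right \<open>n \<in> {0, -1}\<close> by simp
    then show "Y (iter_prod Y u ns u) n w \<in> M" using CM' by (rule subsetD[rotated])
  qed
  ultimately show ?thesis unfolding sr_def by blast
qed

end

theorem mainTheorem10:
  fixes sc :: "complex \<Rightarrow> 'v::ab_group_add \<Rightarrow> 'v"
    and Y :: "'v \<Rightarrow> int \<Rightarrow> 'v \<Rightarrow> 'v"
    and vac om :: 'v and cc :: complex and Vg :: "int \<Rightarrow> 'v set"
    and M :: "'v set"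
  assumes VOA: "is_VOA sc Y vac om cc Vg"
    and M: "module.subspace sc M"
  shows "(\<forall>n0. n0 < 0 \<and> Vg n0 \<noteq> {0} \<and> (\<forall>n<n0. Vg n = {0}) \<longrightarrow>
            (\<forall>v \<in> module.span sc (\<Union>n\<in>{n0..-1}. Vg n). v \<in> sr Y M) \<and> sr Y M \<noteq> {0})
       \<and> (C2_cofinite sc Y \<and> C2 sc Y \<subseteq> M \<longrightarrow>
            (\<forall>k::int. \<forall>u. k > 0 \<and> u \<in> module.span sc (\<Union>i\<in>{1..k}. Vg i) \<longrightarrow> u \<in> sr Y M))"
proof -
  have vs: "vector_space sc" using VOA unfolding is_VOA_def by (elim conjE) assumption
  have I: "voa sc Y vac om cc Vg" unfolding voa_def voa_axioms_def using vs VOA by (rule conjI)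
  show ?thesis
  proof (rule conjI)
    show "\<forall>n0. n0 < 0 \<and> Vg n0 \<noteq> {0} \<and> (\<forall>n<n0. Vg n = {0}) \<longrightarrow>
            (\<forall>v \<in> module.span sc (\<Union>n\<in>{n0..-1}. Vg n). v \<in> sr Y M) \<and> sr Y M \<noteq> {0}"
    proof (intro allI impI)
      fix n0 :: int assume h: "n0 < 0 \<and> Vg n0 \<noteq> {0} \<and> (\<forall>n<n0. Vg n = {0})"
      then have h1: "n0 < 0" and h2: "Vg n0 \<noteq> {0}" and h3: "\<forall>n<n0. Vg n = {0}" by auto
      show "(\<forall>v \<in> module.span sc (\<Union>n\<in>{n0..-1}. Vg n). v \<in> sr Y M) \<and> sr Y M \<noteq> {0}"
        by (rule voa.part1[OF I M h1 h2 h3])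
    qed
  next
    show "C2_cofinite sc Y \<and> C2 sc Y \<subseteq> M \<longrightarrow>
            (\<forall>k::int. \<forall>u. k > 0 \<and> u \<in> module.span sc (\<Union>i\<in>{1..k}. Vg i) \<longrightarrow> u \<in> sr Y M)"
    proof (intro impI allI)
      fix k :: int and u assume h: "C2_cofinite sc Y \<and> C2 sc Y \<subseteq> M"
        and h': "k > 0 \<and> u \<in> module.span sc (\<Union>i\<in>{1..k}. Vg i)"
      from h have c1: "C2_cofinite sc Y" and c2: "C2 sc Y \<subseteq> M" by auto
      from h' have c3: "u \<in> module.span sc (\<Union>i\<in>{1..k}. Vg i)" by auto
      show "u \<in> sr Y M" by (rule voa.part2[OF I M c1 c2 c3])
    qed
  qed
qed

end
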